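(* Let $X$ be the Hirzebruch surface of degree $e\ge0$ and let $J$ be the trivial group (acting trivially on $\operatorname{Pic}(X)$). If $e$ is odd, then $\operatorname{Am}^\chi(X,J)$ is trivial. If $e$ is even, then $\operatorname{Am}^\chi(X,J)\cong(\mathbb{Z}/2\mathbb{Z})^2$.
   Context: The Hirzebruch surface of degree $e$ is a ruled surface over $\mathbb{P}^1$ with a section of self-intersection $-e$. For $J$ trivial, $\operatorname{Am}^\chi(X,J):=\operatorname{Pic}(X)/\langle\chi(D)[D]\mid [D]\in\operatorname{Pic}(X)\rangle$, where $\chi(D)$ is the Euler–Poincaré characteristic of $\mathcal{O}_X(D)$. *)

theory Defs
  imports "HOL-Algebra.Algebra"
begin

text \<open>Model of the Picard group of the Hirzebruch surface of degree e:
  Pic(X) = Z s + Z f, where f is the class of a fibre and s the class of the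
  section with self-intersection -e.  A pair (a,b) stands for the class a s + b f.\<close>

definition hirz_Pic :: "(int \<times> int) monoid" where
  "hirz_Pic = integer_group \<times>\<times> integer_group"

text \<open>Intersection form: f.f = 0, s.f = 1, s.s = -e.\<close>
definition hirz_inter :: "nat \<Rightarrow> int \<times> int \<Rightarrow> int \<times> int \<Rightarrow> int" where
  "hirz_inter e D E = (let (a,b) = D; (c,d) = E in - int e * a * c + a * d + b * c)"

definition hirz_K :: "nat \<Rightarrow> int \<times> int" where
  "hirz_K e = (-2, - (int e + 2))"

text \<open>Euler--Poincare characteristic of O_X(D), via Riemann--Roch on a rational
  surface (chi(O_X) = 1): chi(D) = 1 + D.(D - K)/2 (the numerator is always even).\<close>
definition hirz_chi :: "nat \<Rightarrow> int \<times> int \<Rightarrow> int" where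
  "hirz_chi e D = 1 + (hirz_inter e D D - hirz_inter e D (hirz_K e)) div 2"

definition hirz_Am_chi :: "nat \<Rightarrow> (int \<times> int) set monoid" where
  "hirz_Am_chi e = hirz_Pic Mod
     generate hirz_Pic ((\<lambda>D. pow hirz_Pic D (hirz_chi e D)) ` carrier hirz_Pic)"

end

theory Submission
  imports Defs
begin



lemma G_group: "group hirz_Pic"
  unfolding hirz_Pic_def by (intro DirProd_group) simp_all

lemma G_carrier[simp]: "carrier hirz_Pic = UNIV"
  unfolding hirz_Pic_def by simp

lemma G_mult[simp]: "(x1,y1) \<otimes>\<^bsub>hirz_Pic\<^esub> (x2,y2) = (x1+x2, y1+y2)"
  unfolding hirz_Pic_def by simp

lemma G_one[simp]: "\<one>\<^bsub>hirz_Pic\<^esub> = (0,0)"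
  unfolding hirz_Pic_def by simp

lemma G_inv[simp]: "inv\<^bsub>hirz_Pic\<^esub> (a,b) = (-a,-b)"
  unfolding hirz_Pic_def by (simp add: inv_DirProd)

lemma G_comm: "comm_group hirz_Pic"
  by (rule group.group_comm_groupI[OF G_group]) auto

lemma G_natpow[simp]: "pow hirz_Pic (a,b) (n::nat) = (int n * a, int n * b)"
  by (induction n) (auto simp: algebra_simps)

lemma G_pow[simp]: "pow hirz_Pic (a,b) (n::int) = (n * a, n * b)"
  by (simp add: int_pow_def2)

lemma chi_formula:
  "hirz_chi e (a,b) = 1 + a + b + a*b - int e * ((a*(a+1)) div 2)"
proof -
  have ev: "a*(a+1) = 2 * ((a*(a+1)) div 2)" by simp
  define t where "t = (a*(a+1)) div 2"
  have num: "hirz_inter e (a,b) (a,b) - hirz_inter e (a,b) (hirz_K e)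
        = 2 * (a + b + a*b - int e * t)"
  proof -
    have h: "int e * (a*(a+1)) = int e * (2*t)" using ev unfolding t_def by simp
    show ?thesis using h by (simp add: hirz_inter_def hirz_K_def algebra_simps)
  qed
  show ?thesis unfolding hirz_chi_def num t_def by simp
qed

definition S :: "nat \<Rightarrow> (int \<times> int) set" where
  "S e = (\<lambda>D. pow hirz_Pic D (hirz_chi e D)) ` carrier hirz_Pic"

abbreviation "Hs e \<equiv> generate hirz_Pic (S e)"

lemma Hs_sub: "subgroup (Hs e) hirz_Pic"
  by (rule group.generate_is_subgroup[OF G_group]) simp

lemma gen_in: "(hirz_chi e (a,b) * a, hirz_chi e (a,b) * b) \<in> Hs e"
proof -
  have "(hirz_chi e (a,b) * a, hirz_chi e (a,b) * b) \<in> S e"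
    unfolding S_def by (rule image_eqI[where x="(a,b)"]) auto
  then show ?thesis by (rule generate.incl)
qed

lemma sub_mult: "subgroup K hirz_Pic \<Longrightarrow> (x1,y1) \<in> K \<Longrightarrow> (x2,y2) \<in> K \<Longrightarrow> (x1+x2,y1+y2) \<in> K"
  by (metis G_mult subgroup.m_closed)

lemma sub_pow: "subgroup K hirz_Pic \<Longrightarrow> (a,b) \<in> K \<Longrightarrow> (n*a,n*b) \<in> K"
  by (metis G_pow G_group group.subgroup_int_pow_closed)

lemma sub_lin: "subgroup K hirz_Pic \<Longrightarrow> (x1,y1) \<in> K \<Longrightarrow> (x2,y2) \<in> K \<Longrightarrow>
   (m*x1+n*x2, m*y1+n*y2) \<in> K"
  using sub_mult sub_pow by blast

lemma odd_case:
  assumes "odd e" shows "Hs e = UNIV"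
proof -
  obtain k where k: "int e = 2*k+1" using assms
    by (metis oddE of_nat_Suc of_nat_mult of_nat_numeral Suc_eq_plus1 add.commute)
  have p1: "(0,2) \<in> Hs e" using gen_in[of e 0 1] by (simp add: chi_formula)
  have c2: "hirz_chi e (1,k) = 1" by (simp add: chi_formula k)
  have p2: "(1,k) \<in> Hs e" using gen_in[of e 1 k] unfolding c2 by simp
  have c3: "hirz_chi e (1,k+1) = 3" by (simp add: chi_formula k)
  have p3: "(3,3*k+3) \<in> Hs e" using gen_in[of e 1 "k+1"] unfolding c3 by (simp add: algebra_simps)
  have p4: "(0,3) \<in> Hs e" using sub_lin[OF Hs_sub p3 p2, of 1 "-3"] by (simp add: algebra_simps)
  have p5: "(0,1) \<in> Hs e" using sub_lin[OF Hs_sub p4 p1, of 1 "-1"] by (simp add: algebra_simps)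
  have p6: "(1,0) \<in> Hs e" using sub_lin[OF Hs_sub p2 p5, of 1 "-k"] by (simp add: algebra_simps)
  have "(x,y) \<in> Hs e" for x y using sub_lin[OF Hs_sub p6 p5, of x y] by simp
  then show ?thesis by auto
qed

definition phi :: "int \<times> int \<Rightarrow> int \<times> int" where
  "phi p = (fst p mod 2, snd p mod 2)"

abbreviation "Z2 \<equiv> integer_mod_group 2 \<times>\<times> integer_mod_group 2"

lemma Z2_carrier: "carrier Z2 = {0..<2} \<times> {0..<2}"
  by (simp add: carrier_integer_mod_group)

lemma phi_hom: "group_hom hirz_Pic Z2 phi"
proof -
  have "phi \<in> hom hirz_Pic Z2"
  proof (rule homI)
    fix x assume "x \<in> carrier hirz_Pic"
    show "phi x \<in> carrier Z2" unfolding Z2_carrier phi_def by simp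
  next
    fix x y assume "x \<in> carrier hirz_Pic" "y \<in> carrier hirz_Pic"
    obtain x1 x2 y1 y2 where "x = (x1,x2)" "y = (y1,y2)" by (cases x, cases y) auto
    then show "phi (x \<otimes>\<^bsub>hirz_Pic\<^esub> y) = phi x \<otimes>\<^bsub>Z2\<^esub> phi y"
      by (simp add: phi_def mod_add_eq)
  qed
  then show ?thesis
    by (intro group_hom.intro group_hom_axioms.intro G_group DirProd_group) simp_all
qed

lemma kernel_phi: "kernel hirz_Pic Z2 phi = {p. even (fst p) \<and> even (snd p)}"
  unfolding kernel_def phi_def by auto

lemma phi_onto: "phi ` carrier hirz_Pic = carrier Z2"
proof
  show "phi ` carrier hirz_Pic \<subseteq> carrier Z2" unfolding Z2_carrier phi_def by auto
  show "carrier Z2 \<subseteq> phi ` carrier hirz_Pic"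
  proof
    fix p assume "p \<in> carrier Z2"
    then have "phi p = p" unfolding Z2_carrier phi_def by (cases p) auto
    then show "p \<in> phi ` carrier hirz_Pic" by (metis G_carrier UNIV_I image_eqI)
  qed
qed

lemma even_case:
  assumes "even e" shows "Hs e = kernel hirz_Pic Z2 phi"
proof
  obtain k where k: "int e = 2*k" using assms by (metis evenE of_nat_mult of_nat_numeral)
  show "Hs e \<subseteq> kernel hirz_Pic Z2 phi"
  proof (rule group.generate_subgroup_incl[OF G_group])
    show "subgroup (kernel hirz_Pic Z2 phi) hirz_Pic"
      by (rule group_hom.subgroup_kernel[OF phi_hom])
    show "S e \<subseteq> kernel hirz_Pic Z2 phi"
    proof
      fix q assume "q \<in> S e"
      then obtain a b where q: "q = (hirz_chi e (a,b) * a, hirz_chi e (a,b) * b)"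
        unfolding S_def by auto
      define t where "t = (a*(a+1)) div 2"
      define u where "u = (b*(b+1)) div 2"
      have ta: "a*(a+1) = 2*t" unfolding t_def by simp
      have ub: "b*(b+1) = 2*u" unfolding u_def by simp
      have ch: "hirz_chi e (a,b) = (1+a)*(1+b) - 2*k*t"
        by (simp add: chi_formula k t_def algebra_simps)
      have e1: "(1+a)*(1+b)*a = 2*t*(1+b)"
      proof -
        have "(1+a)*(1+b)*a = (a*(a+1))*(1+b)" by (simp add: algebra_simps)
        also have "\<dots> = 2*t*(1+b)" using ta by simp
        finally show ?thesis .
      qed
      have e2: "(1+a)*(1+b)*b = (1+a)*(2*u)"
      proof -
        have "(1+a)*(1+b)*b = (1+a)*(b*(b+1))" by (simp add: algebra_simps)
        also have "\<dots> = (1+a)*(2*u)" using ub by simp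
        finally show ?thesis .
      qed
      have "hirz_chi e (a,b) * a = 2*(t*(1+b) - k*t*a)"
        unfolding ch left_diff_distrib e1 by (simp add: algebra_simps)
      moreover have "hirz_chi e (a,b) * b = 2*((1+a)*u - k*t*b)"
        unfolding ch left_diff_distrib e2 by (simp add: algebra_simps)
      ultimately show "q \<in> kernel hirz_Pic Z2 phi" unfolding kernel_phi q by simp
    qed
  qed
  show "kernel hirz_Pic Z2 phi \<subseteq> Hs e"
  proof
    fix p assume "p \<in> kernel hirz_Pic Z2 phi"
    then obtain x y where p: "p = (2*x, 2*y)" unfolding kernel_phi
      by (cases p) (auto elim!: evenE)
    have p1: "(0,2) \<in> Hs e" using gen_in[of e 0 1] by (simp add: chi_formula)
    have c2: "hirz_chi e (1,k) = 2" by (simp add: chi_formula k)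
    have p2: "(2,2*k) \<in> Hs e" using gen_in[of e 1 k] unfolding c2 by simp
    have p3: "(2,0) \<in> Hs e" using sub_lin[OF Hs_sub p2 p1, of 1 "-k"] by (simp add: algebra_simps)
    show "p \<in> Hs e" using sub_lin[OF Hs_sub p3 p1, of x y] p by (simp add: algebra_simps)
  qed
qed

theorem proposition7p1:
  fixes e :: nat
  shows "(odd e \<longrightarrow> trivial_group (hirz_Am_chi e)) \<and>
         (even e \<longrightarrow> hirz_Am_chi e \<cong> integer_mod_group 2 \<times>\<times> integer_mod_group 2)"
proof (intro conjI impI)
  have am: "hirz_Am_chi e = hirz_Pic Mod Hs e" unfolding hirz_Am_chi_def S_def by simp
  assume "odd e"
  then have H: "Hs e = UNIV" by (rule odd_case)
  have nrm: "Hs e \<lhd> hirz_Pic"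
    by (rule comm_group.subgroup_imp_normal[OF G_comm Hs_sub])
  have grp: "group (hirz_Pic Mod Hs e)" by (rule normal.factorgroup_is_group[OF nrm])
  have "carrier (hirz_Pic Mod Hs e) = {Hs e}"
  proof -
    have "r_coset hirz_Pic (Hs e) x = Hs e" for x
    proof -
      have xin: "x \<in> Hs e" using H by simp
      show ?thesis using subgroup.rcos_const[OF Hs_sub G_group xin] .
    qed
    then show ?thesis unfolding carrier_FactGroup by auto
  qed
  then show "trivial_group (hirz_Am_chi e)" unfolding am trivial_group_def using grp by simp
next
  have am: "hirz_Am_chi e = hirz_Pic Mod Hs e" unfolding hirz_Am_chi_def S_def by simp
  assume "even e"
  show "hirz_Am_chi e \<cong> Z2" unfolding am even_case[OF \<open>even e\<close>]
    by (rule group_hom.FactGroup_iso[OF phi_hom phi_onto])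
qed

end
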